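(* Let $n\ge1$ and let $R$ be a rook placement in $2\delta_{n-1}$. For $0\le i\le n-1$, let $R_i$ be the rook placement in $2\delta_i$ obtained by keeping only the top $i$ rows of $R$ (with their dots); so $R_0$ is empty and $R_{n-1}=R$. Then $(d(R_0),d(R_1),\dots,d(R_{n-1}))$ is an $n$-chain of Dyck shapes, i.e. $d(R_0)\sqsubset d(R_1)\sqsubset\cdots\sqsubset d(R_{n-1})$ with $d(R_{i})$ of length $2i+2$. Moreover, the map $R\mapsto (d(R_0),\dots,d(R_{n-1}))$ is a bijection between rook placements in $2\delta_{n-1}$ and $n$-chains of Dyck shapes.
   Context: The double staircase $2\delta_n$ is the Young diagram (French convention: rows drawn bottom to top, left-justified) with row lengths $2n,2n-2,\dots,2$ from bottom to top; its columns are numbered $1,\dots,2n$ from left to right; $2\delta_0$ is empty. Note that the top $i$ rows of $2\delta_{n-1}$ form a copy of $2\delta_i$. A rook placement in $2\delta_n$ is a set of dots in cells of $2\delta_n$ with exactly one dot per row and at most one per column. For such $R$, $d(R)$ is the word $w_1\cdots w_{2n+2}$ over $\{\nearrow,\searrow\}$ with $w_1=\nearrow$, $w_{2n+2}=\searrow$, and for $2\le i\le 2n+1$, $w_i=\nearrow$ iff column $i-1$ of $R$ contains a dot (so $d(R_0)=\nearrow\searrow$). A Dyck path of length $2m$ is a lattice path from $(0,0)$ to $(2m,0)$ with steps $\nearrow=(1,1)$, $\searrow=(1,-1)$ never going below the $x$-axis; write $P(x)$ for its height at abscissa $x$. A cell is a point $(a,b)\in\mathbb{Z}^2$ with $b\ge0$,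 $a+b$ even (viewed as the tilted square with vertices $(a,b),(a+1,b\pm1),(a+2,b)$). The Dyck shape of $P$ (length $2m$) is $S(P)=\{(a,b): b\ge0,\ a+b\text{ even},\ 0\le a\le 2m-2,\ b+1\le P(a+1)\}$. Cells are adjacent if they differ by $(\pm1,\pm1)$. A ribbon is a nonempty set of cells, connected for adjacency, containing no four cells $(a,b),(a+1,b+1),(a+1,b-1),(a+2,b)$. For Dyck paths $D$ of length $2m$ and $E$ of length $2m+2$, $D\sqsubset E$ means $S(D)\subseteq S(E)$ and $S(E)\setminus S(D)$ is a ribbon. An $n$-chain of Dyck shapes is a sequence $D_1\sqsubset D_2\sqsubset\cdots\sqsubset D_n$ of Dyck paths with $D_i$ of length $2i$. *)

theory Defs
  imports Main
begin

text \<open>Rows of the double staircase are indexed from the TOP: row k (1 \<le> k \<le> n) of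
  2delta_n has length 2k (it is the (n-k+1)-th row from the bottom).\<close>

definition cells :: "nat \<Rightarrow> (nat \<times> nat) set" where
  "cells n = {(k, c). 1 \<le> k \<and> k \<le> n \<and> 1 \<le> c \<and> c \<le> 2 * k}"

definition rook :: "nat \<Rightarrow> (nat \<times> nat) set \<Rightarrow> bool" where
  "rook n R \<longleftrightarrow> R \<subseteq> cells n
     \<and> (\<forall>k \<in> {1..n}. \<exists>!c. (k, c) \<in> R)
     \<and> (\<forall>k k' c. (k, c) \<in> R \<longrightarrow> (k', c) \<in> R \<longrightarrow> k = k')"

definition top_rows :: "nat \<Rightarrow> (nat \<times> nat) set \<Rightarrow> (nat \<times> nat) set" where
  "top_rows i R = {(k, c) \<in> R. k \<le> i}"

text \<open>Paths are lists of steps: True = up-step, False = down-step.\<close>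
definition dword :: "nat \<Rightarrow> (nat \<times> nat) set \<Rightarrow> bool list" where
  "dword n R = [True] @ map (\<lambda>c. \<exists>k. (k, c) \<in> R) [1..<2 * n + 1] @ [False]"

definition height :: "bool list \<Rightarrow> nat \<Rightarrow> int" where
  "height P x = sum_list (map (\<lambda>s. if s then 1 else -1) (take x P))"

definition dyck :: "bool list \<Rightarrow> bool" where
  "dyck P \<longleftrightarrow> even (length P) \<and> (\<forall>x \<le> length P. height P x \<ge> 0)
     \<and> height P (length P) = 0"

definition shape :: "bool list \<Rightarrow> (int \<times> int) set" where
  "shape P = {(a, b). 0 \<le> b \<and> even (a + b) \<and> 0 \<le> a \<and> a \<le> int (length P) - 2
     \<and> b + 1 \<le> height P (nat (a + 1))}"

definition adj :: "int \<times> int \<Rightarrow> int \<times> int \<Rightarrow> bool" where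
  "adj u v \<longleftrightarrow> \<bar>fst u - fst v\<bar> = 1 \<and> \<bar>snd u - snd v\<bar> = 1"

definition ribbon :: "(int \<times> int) set \<Rightarrow> bool" where
  "ribbon A \<longleftrightarrow> A \<noteq> {}
     \<and> (\<forall>x \<in> A. \<forall>y \<in> A. (\<lambda>u v. u \<in> A \<and> v \<in> A \<and> adj u v)\<^sup>*\<^sup>* x y)
     \<and> \<not> (\<exists>a b. (a, b) \<in> A \<and> (a + 1, b + 1) \<in> A \<and> (a + 1, b - 1) \<in> A \<and> (a + 2, b) \<in> A)"

definition covered :: "bool list \<Rightarrow> bool list \<Rightarrow> bool" where
  "covered D E \<longleftrightarrow> shape D \<subseteq> shape E \<and> ribbon (shape E - shape D)"

text \<open>An n-chain D_1,...,D_n is the list Ds with Ds ! (i-1) = D_i.\<close>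
definition dyck_chain :: "nat \<Rightarrow> bool list list \<Rightarrow> bool" where
  "dyck_chain n Ds \<longleftrightarrow> length Ds = n
     \<and> (\<forall>i < n. dyck (Ds ! i) \<and> length (Ds ! i) = 2 * i + 2)
     \<and> (\<forall>i. i + 1 < n \<longrightarrow> covered (Ds ! i) (Ds ! (i + 1)))"

definition rook_chain :: "nat \<Rightarrow> (nat \<times> nat) set \<Rightarrow> bool list list" where
  "rook_chain n R = map (\<lambda>i. dword i (top_rows i R)) [0..<n]"

end

theory Submission
  imports Defs
begin


lemma height_0[simp]: "height P 0 = 0" by (simp add: height_def)

lemma height_Suc: "x < length P \<Longrightarrow> height P (Suc x) = height P x + (if P!x then 1 else -1)"
  by (simp add: height_def take_Suc_conv_app_nth)

lemma height_ge: "length P \<le> x \<Longrightarrow> height P x = height P (length P)"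
  by (simp add: height_def)

lemma height_append: "x \<le> length xs \<Longrightarrow> height (xs@ys) x = height xs x"
  by (simp add: height_def)

lemma height_parity: "x \<le> length P \<Longrightarrow> even (height P x + int x)"
proof (induction x)
  case 0 then show ?case by simp
next
  case (Suc x)
  then have "even (height P x + int x)" by simp
  then show ?case using height_Suc[of x P] Suc.prems by auto
qed

lemma height_update_le:
  assumes "c < length P" "\<not> P!c"
  shows "x \<le> length P \<Longrightarrow> height (P[c:=True]) x = height P x + (if c < x then 2 else 0)"
proof (induction x)
  case 0 then show ?case by simp
next
  case (Suc x)
  then have "height (P[c:=True]) x = height P x + (if c < x then 2 else 0)" by simp
  moreover have "height (P[c:=True]) (Suc x) = height (P[c:=True]) x + (if P[c:=True]!x then 1 else -1)"
    using height_Suc[of x "P[c:=True]"] Suc.prems by simp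
  moreover have "height P (Suc x) = height P x + (if P!x then 1 else -1)"
    using height_Suc[of x P] Suc.prems by simp
  ultimately show ?case using assms by (auto simp: nth_list_update)
qed

lemma height_update:
  assumes "c < length P" "\<not> P!c"
  shows "height (P[c:=True]) x = height P x + (if c < x then 2 else 0)"
proof (cases "x \<le> length P")
  case True then show ?thesis using height_update_le[OF assms] by simp
next
  case False
  then have "height (P[c:=True]) x = height (P[c:=True]) (length P)"
    using height_ge[of "P[c:=True]" x] by simp
  also have "\<dots> = height P (length P) + 2" using height_update_le[OF assms, of "length P"] assms by simp
  finally show ?thesis using False height_ge[of P x] assms by simp
qed

lemma height_step: "x < length P \<Longrightarrow> height P (Suc x) = height P x + 1 \<or> height P (Suc x) = height P x - 1"
  using height_Suc[of x P] by auto

lemma dyck_first: assumes "dyck P" "length P = 2*m" "1 \<le> m" shows "P!0"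
proof -
  have "height P 1 \<ge> 0" using assms unfolding dyck_def by auto
  then show ?thesis using height_Suc[of 0 P] assms by (auto split: if_splits)
qed

lemma dyck_ge: "dyck P \<Longrightarrow> x \<le> length P \<Longrightarrow> height P x \<ge> 0"
  unfolding dyck_def by auto

lemma dyck_end: "dyck P \<Longrightarrow> height P (length P) = 0"
  unfolding dyck_def by auto

lemma ext_heights:
  assumes "dyck D" "length D = 2*m"
  shows "x \<le> 2*m \<Longrightarrow> height (D@[False,False]) x = height D x"
    and "height (D@[False,False]) (2*m+1) = -1"
    and "height (D@[False,False]) (2*m+2) = -2"
proof -
  show "x \<le> 2*m \<Longrightarrow> height (D@[False,False]) x = height D x" using height_append assms by simp
  have h0: "height (D@[False,False]) (2*m) = 0" using height_append[of "2*m" D] assms dyck_end[OF assms(1)] by simp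
  show h1: "height (D@[False,False]) (2*m+1) = -1"
    using height_Suc[of "2*m" "D@[False,False]"] h0 assms by (simp add: nth_append)
  show "height (D@[False,False]) (2*m+2) = -2"
    using height_Suc[of "2*m+1" "D@[False,False]"] h1 assms by (simp add: nth_append)
qed

lemma ext_ge:
  assumes "dyck D" "length D = 2*m"
  shows "x \<le> 2*m+2 \<Longrightarrow> height (D@[False,False]) x \<ge> -2"
    and "x \<le> 2*m+1 \<Longrightarrow> height (D@[False,False]) x \<ge> -1"
    and "x \<le> 2*m \<Longrightarrow> height (D@[False,False]) x \<ge> 0"
proof -
  show g0: "x \<le> 2*m \<Longrightarrow> height (D@[False,False]) x \<ge> 0" for x
    using ext_heights(1)[OF assms] dyck_ge[OF assms(1)] assms(2) by simp
  show g1: "x \<le> 2*m+1 \<Longrightarrow> height (D@[False,False]) x \<ge> -1" for x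
    using g0[of x] ext_heights(2)[OF assms] by (cases "x = 2*m+1") auto
  show "x \<le> 2*m+2 \<Longrightarrow> height (D@[False,False]) x \<ge> -2"
    using g1[of x] ext_heights(3)[OF assms] by (cases "x = 2*m+2") auto
qed

definition shp :: "(nat \<Rightarrow> int) \<Rightarrow> int \<Rightarrow> (int \<times> int) set" where
  "shp h L = {(a, b). 0 \<le> b \<and> even (a + b) \<and> 0 \<le> a \<and> a \<le> L \<and> b + 1 \<le> h (nat (a + 1))}"

lemma shape_E: "length E = 2*m+2 \<Longrightarrow> shape E = shp (height E) (2*int m)"
  unfolding shape_def shp_def by auto

lemma shape_D:
  assumes "dyck D" "length D = 2*m"
  shows "shape D = shp (height (D@[False,False])) (2*int m)"
proof -
  have e1: "x \<le> 2*m \<Longrightarrow> height (D@[False,False]) x = height D x" for x using ext_heights(1)[OF assms] .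
  have e2: "height (D@[False,False]) (2*m) = 0" using e1[of "2*m"] dyck_end[OF assms(1)] assms(2) by simp
  note e3 = ext_heights(2)[OF assms]
  show ?thesis
  proof (intro set_eqI iffI)
    fix p assume "p \<in> shape D"
    then obtain a b where p: "p = (a,b)" "0 \<le> b" "even (a+b)" "0 \<le> a" "a \<le> 2*int m - 2" "b+1 \<le> height D (nat (a+1))"
      unfolding shape_def using assms(2) by auto
    have "height (D@[False,False]) (nat (a+1)) = height D (nat (a+1))" using e1 p by auto
    then show "p \<in> shp (height (D@[False,False])) (2*int m)" unfolding shp_def using p by auto
  next
    fix p assume "p \<in> shp (height (D@[False,False])) (2*int m)"
    then obtain a b where p: "p = (a,b)" "0 \<le> b" "even (a+b)" "0 \<le> a" "a \<le> 2*int m" "b+1 \<le> height (D@[False,False]) (nat (a+1))"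
      unfolding shp_def by auto
    have "a \<noteq> 2*int m - 1"
    proof
      assume "a = 2*int m - 1" then have "nat (a+1) = 2*m" by simp
      then show False using p e2 by simp
    qed
    moreover have "a \<noteq> 2*int m"
    proof
      assume "a = 2*int m" then have "nat (a+1) = 2*m+1" by simp
      then show False using p e3 by simp
    qed
    ultimately have "a \<le> 2*int m - 2" using p by linarith
    then have "height (D@[False,False]) (nat (a+1)) = height D (nat (a+1))" using e1 p by auto
    then show "p \<in> shape D" unfolding shape_def using p assms(2) \<open>a \<le> 2*int m - 2\<close> by auto
  qed
qed



lemma path_lemma:
  fixes cell :: "nat \<Rightarrow> int \<times> int" and A
  assumes inA: "\<And>a. c \<le> a \<Longrightarrow> a \<le> N \<Longrightarrow> cell a \<in> A"
    and adjc: "\<And>a. c \<le> a \<Longrightarrow> a < N \<Longrightarrow> adj (cell a) (cell (Suc a))"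
    and ca: "c \<le> a" and aa: "a \<le> a'"
  shows "a' \<le> N \<longrightarrow>
     (\<lambda>u v. u \<in> A \<and> v \<in> A \<and> adj u v)\<^sup>*\<^sup>* (cell a) (cell a') \<and>
     (\<lambda>u v. u \<in> A \<and> v \<in> A \<and> adj u v)\<^sup>*\<^sup>* (cell a') (cell a)"
  using aa
proof (induction a' rule: dec_induct)
  case base then show ?case by simp
next
  case (step k)
  show ?case
  proof
    assume kN: "Suc k \<le> N"
    have s1: "adj (cell k) (cell (Suc k))" using adjc step kN ca by simp
    have s2: "adj (cell (Suc k)) (cell k)" using s1 unfolding adj_def by (simp add: abs_minus_commute)
    have i1: "cell k \<in> A" "cell (Suc k) \<in> A" using inA step kN ca by auto
    show "(\<lambda>u v. u \<in> A \<and> v \<in> A \<and> adj u v)\<^sup>*\<^sup>* (cell a) (cell (Suc k)) \<and>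
     (\<lambda>u v. u \<in> A \<and> v \<in> A \<and> adj u v)\<^sup>*\<^sup>* (cell (Suc k)) (cell a)"
      using step.IH kN s1 s2 i1
      by (auto intro: rtranclp.rtrancl_into_rtrancl converse_rtranclp_into_rtranclp)
  qed
qed

lemma lemA:
  assumes D: "dyck D" "length D = 2*m" and c: "1 \<le> c" "c \<le> 2*m"
    and nc: "\<not> (D@[False,False])!c" and E: "E = (D@[False,False])[c:=True]"
  shows "dyck E" "covered D E"
proof -
  define hD where "hD = height (D@[False,False])"
  have lenE: "length E = 2*m+2" using E D by simp
  have hE: "height E x = hD x + (if c < x then 2 else 0)" for x
    unfolding E hD_def using height_update[of c "D@[False,False]" x] c nc D by simp
  note g = ext_ge[OF D, folded hD_def]
  note eh = ext_heights[OF D, folded hD_def]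
  have par: "x \<le> 2*m+2 \<Longrightarrow> even (hD x + int x)" for x
    unfolding hD_def using height_parity[of x "D@[False,False]"] D by simp
  show "dyck E"
    unfolding dyck_def
  proof (intro conjI allI impI)
    show "even (length E)" using lenE by simp
    show "0 \<le> height E x" if "x \<le> length E" for x
      using g[of x] hE[of x] that lenE c by (cases "c < x") auto
    show "height E (length E) = 0" using hE[of "2*m+2"] eh(3) lenE c by simp
  qed
  have sD: "shape D = shp hD (2*int m)" using shape_D[OF D] hD_def by simp
  have sE: "shape E = shp (height E) (2*int m)" using shape_E[OF lenE] .
  define cell where "cell a = (int a, hD (a+1) + 1)" for a
  have diff: "shape E - shape D = cell ` {c..2*m}"
  proof (intro set_eqI iffI)
    fix p assume p: "p \<in> shape E - shape D"
    then obtain a b where ab: "p = (a,b)" "0 \<le> b" "even (a+b)" "0 \<le> a" "a \<le> 2*int m"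
       "b+1 \<le> height E (nat (a+1))" "\<not> b + 1 \<le> hD (nat (a+1))"
      unfolding sD sE shp_def by auto
    define k where "k = nat a"
    have ak: "a = int k" "nat (a+1) = k+1" using ab k_def by auto
    have kc: "c \<le> k" using ab hE[of "k+1"] ak by (cases "c < k+1") auto
    have "even (hD (k+1) + int (k+1))" using par[of "k+1"] ab ak by simp
    moreover have "even (b + int k)" using ab ak by simp
    moreover have "b+1 \<le> hD (k+1) + 2" "hD (k+1) < b+1" using ab ak hE[of "k+1"] kc by auto
    ultimately have "b = hD (k+1) + 1" by presburger
    then show "p \<in> cell ` {c..2*m}" unfolding cell_def using ab ak kc by auto
  next
    fix p assume "p \<in> cell ` {c..2*m}"
    then obtain k where k: "c \<le> k" "k \<le> 2*m" "p = cell k" by auto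
    have "hD (k+1) \<ge> -1" using g(2)[of "k+1"] k by simp
    moreover have "even (hD (k+1) + int (k+1))" using par[of "k+1"] k by simp
    moreover have "nat (int k + 1) = k+1" by simp
    ultimately show "p \<in> shape E - shape D"
      unfolding sD sE shp_def cell_def k(3) using hE[of "k+1"] k by auto
  qed
  have sub: "shape D \<subseteq> shape E"
    unfolding sD sE shp_def using hE by fastforce
  have adjc: "adj (cell a) (cell (Suc a))" if "a < 2*m" for a
  proof -
    have "a + 1 < length (D@[False,False])" using that D by simp
    from height_step[OF this] show ?thesis unfolding adj_def cell_def hD_def by auto
  qed
  have conn: "(\<lambda>u v. u \<in> cell ` {c..2*m} \<and> v \<in> cell ` {c..2*m} \<and> adj u v)\<^sup>*\<^sup>* x y"
    if xyA: "x \<in> cell ` {c..2*m}" "y \<in> cell ` {c..2*m}" for x y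
  proof -
    obtain a a' where aa: "a \<in> {c..2*m}" "a' \<in> {c..2*m}" "x = cell a" "y = cell a'" using xyA by blast
    note pl = path_lemma[of c "2*m" cell "cell ` {c..2*m}", OF _ adjc]
    show ?thesis
    proof (cases "a \<le> a'")
      case True then show ?thesis using pl[of a a'] aa adjc by auto
    next
      case False then show ?thesis using pl[of a' a] aa adjc by auto
    qed
  qed
  have nob: "\<not> (\<exists>a b. (a, b) \<in> cell ` {c..2*m} \<and> (a + 1, b + 1) \<in> cell ` {c..2*m}
      \<and> (a + 1, b - 1) \<in> cell ` {c..2*m} \<and> (a + 2, b) \<in> cell ` {c..2*m})"
    unfolding cell_def by auto
  show "covered D E"
    unfolding covered_def ribbon_def diff using sub conn nob c by auto
qed



lemma sep_lemma:
  assumes "(\<lambda>u v. u \<in> A \<and> v \<in> A \<and> adj u v)\<^sup>*\<^sup>* p q" "fst p < k" "\<And>y. (k, y) \<notin> A"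
  shows "fst q < k"
  using assms(1,2)
proof (induction rule: rtranclp_induct)
  case base then show ?case by simp
next
  case (step y z)
  then have "\<bar>fst y - fst z\<bar> = 1" "z \<in> A" unfolding adj_def by auto
  moreover have "fst z \<noteq> k" using assms(3) \<open>z \<in> A\<close> by (cases z) auto
  ultimately show ?case using step by auto
qed

lemma lemB:
  assumes D: "dyck D" "length D = 2*m" "1 \<le> m" and E: "dyck E" "length E = 2*m+2"
    and cov: "covered D E"
  shows "\<exists>c. 1 \<le> c \<and> c \<le> 2*m \<and> \<not> (D@[False,False])!c \<and> E = (D@[False,False])[c:=True]"
proof -
  define hD where "hD = height (D@[False,False])"
  define hE where "hE = height E"
  define f where "f x = hE x - hD x" for x
  note g = ext_ge[OF D(1,2), folded hD_def]
  note eh = ext_heights[OF D(1,2), folded hD_def]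
  have lenD': "length (D@[False,False]) = 2*m+2" using D by simp
  have parD: "x \<le> 2*m+2 \<Longrightarrow> even (hD x + int x)" for x
    unfolding hD_def using height_parity[of x "D@[False,False]"] lenD' by simp
  have parE: "x \<le> 2*m+2 \<Longrightarrow> even (hE x + int x)" for x
    unfolding hE_def using height_parity[of x E] E by simp
  have stD: "x < 2*m+2 \<Longrightarrow> hD (Suc x) = hD x + (if (D@[False,False])!x then 1 else -1)" for x
    unfolding hD_def using height_Suc[of x "D@[False,False]"] lenD' by simp
  have stE: "x < 2*m+2 \<Longrightarrow> hE (Suc x) = hE x + (if E!x then 1 else -1)" for x
    unfolding hE_def using height_Suc[of x E] E by simp
  have gE: "x \<le> 2*m+2 \<Longrightarrow> hE x \<ge> 0" for x unfolding hE_def using dyck_ge[OF E(1)] E by simp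
  have sD: "shape D = shp hD (2*int m)" using shape_D[OF D(1,2)] hD_def by simp
  have sE: "shape E = shp hE (2*int m)" using shape_E[OF E(2)] hE_def by simp
  have sub: "shp hD (2*int m) \<subseteq> shp hE (2*int m)" using cov sD sE unfolding covered_def by simp
  define A where "A = shp hE (2*int m) - shp hD (2*int m)"
  have rib: "ribbon A" using cov sD sE unfolding covered_def A_def by simp
  have mem: "(a, b) \<in> shp h L \<longleftrightarrow> 0 \<le> b \<and> even (a + b) \<and> 0 \<le> a \<and> a \<le> L \<and> b + 1 \<le> h (nat (a + 1))"
    for a b h L unfolding shp_def by simp
  have f0: "f 0 = 0" unfolding f_def hD_def hE_def by simp
  have D0: "D!0" using dyck_first[OF D] .
  have E0: "E!0" using dyck_first[OF E(1), of "m+1"] E by simp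
  have f1: "f 1 = 0" unfolding f_def using stD[of 0] stE[of 0] D0 E0 D
    by (simp add: nth_append hD_def hE_def)
  have hE2: "hE (2*m+2) = 0" using dyck_end[OF E(1)] E hE_def by simp
  have hE1: "hE (2*m+1) = 1" using stE[of "2*m+1"] hE2 gE[of "2*m+1"] by (auto split: if_splits)
  have f2m1: "f (2*m+1) = 2" unfolding f_def using hE1 eh(2) by simp
  have f2m2: "f (2*m+2) = 2" unfolding f_def using hE2 eh(3) by simp
  have cont: "hD x \<le> hE x" if "1 \<le> x" "x \<le> 2*m+1" for x
  proof (cases "hD x \<ge> 1")
    case True
    have "(int x - 1, hD x - 1) \<in> shp hD (2*int m)"
      unfolding mem using True parD[of x] that by (auto simp: nat_diff_distrib)
    then have "(int x - 1, hD x - 1) \<in> shp hE (2*int m)" using sub by blast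
    then show ?thesis unfolding mem using that by simp
  next
    case False then show ?thesis using gE[of x] that by simp
  qed
  have nob: "f x \<le> 2" if x: "2 \<le> x" "x \<le> 2*m" for x
  proof (rule ccontr)
    assume "\<not> f x \<le> 2"
    moreover have "even (f x)" using parD[of x] parE[of x] x unfolding f_def by presburger
    ultimately have f4: "f x \<ge> 4" by presburger
    define y where "y = hD x"
    have y0: "y \<ge> 0" using g(3)[of x] x y_def by simp
    have ey: "even (y + int x)" using parD[of x] x y_def by simp
    have hEx: "hE x \<ge> y + 4" using f4 unfolding f_def y_def by simp
    have e1: "hE (x-1) \<ge> hE x - 1" "hD (x-1) \<le> y + 1"
      using stE[of "x-1"] stD[of "x-1"] x y_def by (auto split: if_splits)
    have e2: "hE (x+1) \<ge> hE x - 1" "hD (x+1) \<le> y + 1"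
      using stE[of "x"] stD[of "x"] x y_def by (auto split: if_splits)
    have n1: "nat (int x - 2 + 1) = x - 1" "nat (int x - 2 + 1 + 1) = x" "nat (int x - 2 + 2 + 1) = x + 1"
      using x by auto
    have "(int x - 2, y + 2) \<in> A" unfolding A_def using y0 ey x e1 hEx
      by (simp only: Diff_iff mem n1) (auto simp: algebra_simps)
    moreover have "(int x - 2 + 1, y + 2 + 1) \<in> A" unfolding A_def using y0 ey x hEx
      by (simp only: Diff_iff mem n1) (auto simp: algebra_simps y_def)
    moreover have "(int x - 2 + 1, y + 2 - 1) \<in> A" unfolding A_def using y0 ey x hEx
      by (simp only: Diff_iff mem n1) (auto simp: algebra_simps y_def)
    moreover have "(int x - 2 + 2, y + 2) \<in> A" unfolding A_def using y0 ey x e2 hEx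
      by (simp only: Diff_iff mem n1) (auto simp: algebra_simps)
    ultimately show False using rib unfolding ribbon_def by blast
  qed
  have ff: "f x = 0 \<or> f x = 2" if x: "1 \<le> x" "x \<le> 2*m+2" for x
  proof -
    consider "x = 1" | "2 \<le> x \<and> x \<le> 2*m" | "x = 2*m+1" | "x = 2*m+2" using x by linarith
    then show ?thesis
    proof cases
      case 2
      have "even (f x)" using parD[of x] parE[of x] x unfolding f_def by presburger
      moreover have "f x \<ge> 0" using cont[of x] 2 unfolding f_def by simp
      ultimately show ?thesis using nob[of x] 2 by presburger
    qed (use f1 f2m1 f2m2 in auto)
  qed
  have cellA: "(int x - 1, hD x + 1) \<in> A" if "1 \<le> x" "x \<le> 2*m+1" "f x = 2" for x
  proof -
    have "nat (int x - 1 + 1) = x" using that by simp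
    moreover have "hD x \<ge> -1" using g(2)[of x] that by simp
    moreover have "even (hD x + int x)" using parD[of x] that by simp
    ultimately show ?thesis unfolding A_def using that
      by (simp only: Diff_iff mem) (auto simp: f_def algebra_simps)
  qed
  have nocell: "(int x - 1, b) \<notin> A" if "1 \<le> x" "x \<le> 2*m+1" "f x = 0" for x b
  proof -
    have "nat (int x - 1 + 1) = x" using that by simp
    then show ?thesis unfolding A_def using that by (simp only: Diff_iff mem) (auto simp: f_def)
  qed
  define S where "S = {x. x \<le> 2*m+1 \<and> f x = 0}"
  define c where "c = Max S"
  have finS: "finite S" unfolding S_def by simp
  have "1 \<in> S" unfolding S_def using f1 by simp
  then have "S \<noteq> {}" by auto
  then have cS: "c \<in> S" "1 \<le> c" using finS c_def Max_in[OF finS] Max_ge[OF finS \<open>1 \<in> S\<close>] by auto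
  have fc: "f c = 0" "c \<le> 2*m+1" using cS S_def by auto
  have c2m: "c \<le> 2*m" using fc f2m1 by (cases "c = 2*m+1") auto
  have above: "f x = 2" if "c < x" "x \<le> 2*m+2" for x
  proof (cases "x = 2*m+2")
    case True then show ?thesis using f2m2 by simp
  next
    case False
    then have "x \<notin> S" using that Max_ge[OF finS, of x] c_def by auto
    then show ?thesis using ff[of x] that False cS unfolding S_def by auto
  qed
  have below: "f x = 0" if "x \<le> c" for x
  proof (rule ccontr)
    assume nz: "f x \<noteq> 0"
    then have x1: "1 \<le> x" using f0 by (cases x) auto
    have fx: "f x = 2" using ff[of x] x1 that c2m nz by auto
    have xc: "x < c" using that fx fc by (cases "x = c") auto
    have pA: "(int x - 1, hD x + 1) \<in> A" using cellA[of x] x1 xc c2m fx by simp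
    have qA: "(int (2*m+1) - 1, hD (2*m+1) + 1) \<in> A" using cellA[of "2*m+1"] f2m1 by simp
    have "(\<lambda>u v. u \<in> A \<and> v \<in> A \<and> adj u v)\<^sup>*\<^sup>* (int x - 1, hD x + 1) (int (2*m+1) - 1, hD (2*m+1) + 1)"
      using rib pA qA unfolding ribbon_def by blast
    from sep_lemma[OF this, of "int c - 1"] show False
      using xc nocell[of c] fc cS c2m by auto
  qed
  have eqE: "E = (D@[False,False])[c:=True]"
  proof (rule nth_equalityI)
    show "length E = length ((D@[False,False])[c:=True])" using E D by simp
    fix j assume "j < length E"
    then have j: "j < 2*m+2" using E by simp
    have fs: "f (Suc j) - f j = (if j = c then 2 else 0)"
      using above[of "Suc j"] above[of j] below[of j] below[of "Suc j"] j
      by (cases "j < c"; cases "j = c") auto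
    have "f (Suc j) - f j = (if E!j then 1 else -1) - (if (D@[False,False])!j then 1 else -1)"
      unfolding f_def using stD[OF j] stE[OF j] by simp
    with fs have "(if j = c then 2 else 0) = ((if E!j then 1 else -1) - (if (D@[False,False])!j then 1 else -1) :: int)"
      by simp
    then show "E!j = (D@[False,False])[c:=True]!j" using j c2m lenD'
      by (auto simp: nth_list_update split: if_splits)
  qed
  have "\<not> (D@[False,False])!c"
  proof -
    have "f (Suc c) - f c = 2" using above[of "Suc c"] fc c2m by simp
    then show ?thesis unfolding f_def using stD[of c] stE[of c] c2m by (auto split: if_splits)
  qed
  then show ?thesis using cS c2m eqE by blast
qed



lemma dword_len[simp]: "length (dword i R) = 2*i+2" by (simp add: dword_def)

lemma dword_nth: "j < 2*i+2 \<Longrightarrow> dword i R ! j = (j = 0 \<or> (j \<le> 2*i \<and> (\<exists>k. (k,j) \<in> R)))"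
proof (cases j)
  case 0 then show ?thesis by (simp add: dword_def)
next
  case (Suc j')
  assume j: "j < 2*i+2"
  show ?thesis
  proof (cases "j' < 2*i")
    case True
    have "(map (\<lambda>c. \<exists>k. (k,c)\<in>R) [1..<2*i+1] @ [False]) ! j' = (\<exists>k. (k, Suc j') \<in> R)"
    proof -
      have "length (map (\<lambda>c. \<exists>k. (k,c)\<in>R) [1..<2*i+1]) = 2*i" by simp
      then have "(map (\<lambda>c. \<exists>k. (k,c)\<in>R) [1..<2*i+1] @ [False]) ! j' = map (\<lambda>c. \<exists>k. (k,c)\<in>R) [1..<2*i+1] ! j'"
        using True by (simp only: nth_append) simp
      also have "\<dots> = (\<exists>k. (k, Suc j') \<in> R)" using True by (simp del: upt_Suc)
      finally show ?thesis .
    qed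
    then show ?thesis using Suc True by (simp add: dword_def)
  next
    case False
    then have "j' = 2*i" using j Suc by simp
    then show ?thesis using Suc by (simp add: dword_def nth_append)
  qed
qed

lemma dword_nth': "j < 2*i+4 \<Longrightarrow> (dword i R @ [False,False]) ! j = (j = 0 \<or> (j \<le> 2*i \<and> (\<exists>k. (k,j) \<in> R)))"
proof -
  assume j: "j < 2*i+4"
  show ?thesis
  proof (cases "j < 2*i+2")
    case True then show ?thesis using dword_nth[of j i R] by (simp add: nth_append)
  next
    case False
    then have "j - (2*i+2) = 0 \<or> j - (2*i+2) = 1" using j by auto
    then show ?thesis using False by (auto simp: nth_append)
  qed
qed

lemma top_rows_mem[simp]: "(k,c) \<in> top_rows i R \<longleftrightarrow> (k,c) \<in> R \<and> k \<le> i"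
  by (simp add: top_rows_def)

lemma dword_step:
  assumes col: "\<And>k c. (k,c) \<in> R \<Longrightarrow> c \<le> 2*k"
    and row: "\<And>c'. (Suc i, c') \<in> R \<longleftrightarrow> c' = c" and c: "1 \<le> c" "c \<le> 2*i+2"
  shows "dword (Suc i) (top_rows (Suc i) R) = (dword i (top_rows i R) @ [False,False])[c:=True]"
proof (rule nth_equalityI)
  show "length (dword (Suc i) (top_rows (Suc i) R)) = length ((dword i (top_rows i R) @ [False,False])[c:=True])"
    by simp
  fix j assume "j < length (dword (Suc i) (top_rows (Suc i) R))"
  then have j: "j < 2*i+4" by simp
  have L: "dword (Suc i) (top_rows (Suc i) R) ! j = (j = 0 \<or> (j \<le> 2*i+2 \<and> (\<exists>k. (k,j) \<in> R \<and> k \<le> Suc i)))"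
    using dword_nth[of j "Suc i" "top_rows (Suc i) R"] j by simp
  show "dword (Suc i) (top_rows (Suc i) R) ! j = (dword i (top_rows i R) @ [False,False])[c:=True] ! j"
  proof (cases "j = c")
    case True
    then show ?thesis using L row[of c] c j by (auto simp: nth_list_update)
  next
    case False
    have R: "(dword i (top_rows i R) @ [False,False])[c:=True] ! j = (j = 0 \<or> (j \<le> 2*i \<and> (\<exists>k. (k,j) \<in> R \<and> k \<le> i)))"
      using dword_nth'[of j i "top_rows i R"] j False by (simp add: nth_list_update)
    have "(\<exists>k. (k,j) \<in> R \<and> k \<le> Suc i) \<longleftrightarrow> (\<exists>k. (k,j) \<in> R \<and> k \<le> i)"
      using row[of j] False le_Suc_eq by blast
    moreover have "(k,j) \<in> R \<Longrightarrow> k \<le> i \<Longrightarrow> j \<le> 2*i" for k using col[of k j] by simp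
    ultimately show ?thesis using L R by auto
  qed
qed

lemma dword0: "dword 0 R = [True, False]" by (simp add: dword_def)

lemma dyck_TF: "dyck [True, False]"
  unfolding dyck_def height_def
proof (intro conjI allI impI)
  fix x :: nat assume "x \<le> length [True, False]"
  then have "x = 0 \<or> x = 1 \<or> x = 2" by auto
  then show "(0::int) \<le> sum_list (map (\<lambda>s. if s then 1 else - 1) (take x [True, False]))"
    by (elim disjE) simp_all
qed auto

lemma dyck_len2: assumes "dyck P" "length P = 2" shows "P = [True, False]"
proof -
  have "P!0" using dyck_first[OF assms(1), of 1] assms by simp
  moreover have "height P 2 = 0" using dyck_end[OF assms(1)] assms by simp
  moreover obtain a b where "P = [a,b]" using assms(2)
    by (metis (no_types) One_nat_def Suc_1 length_0_conv length_Suc_conv)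
  ultimately show ?thesis by (auto simp: height_def split: if_splits)
qed



lemma rook_facts:
  assumes "rook N R"
  shows "(k,c) \<in> R \<Longrightarrow> 1 \<le> k \<and> k \<le> N \<and> 1 \<le> c \<and> c \<le> 2*k"
    and "1 \<le> k \<Longrightarrow> k \<le> N \<Longrightarrow> \<exists>!c. (k,c) \<in> R"
    and "(k,c) \<in> R \<Longrightarrow> (k',c) \<in> R \<Longrightarrow> k = k'"
  using assms unfolding rook_def cells_def by auto

lemma rook_top: "rook N R \<Longrightarrow> i \<le> N \<Longrightarrow> rook i (top_rows i R)"
  unfolding rook_def cells_def top_rows_def by auto

lemma chain_step:
  assumes R: "rook N R" and i: "Suc i \<le> N"
  shows "\<exists>c. 1 \<le> c \<and> c \<le> 2*(i+1) \<and> \<not> (dword i (top_rows i R) @ [False,False])!c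
     \<and> dword (Suc i) (top_rows (Suc i) R) = (dword i (top_rows i R) @ [False,False])[c:=True]"
proof -
  obtain c where c: "(Suc i, c) \<in> R" using rook_facts(2)[OF R, of "Suc i"] i by auto
  have row: "(Suc i, c') \<in> R \<longleftrightarrow> c' = c" for c'
    using rook_facts(2)[OF R, of "Suc i"] i c by auto
  have cb: "1 \<le> c" "c \<le> 2*(i+1)" using rook_facts(1)[OF R c] by auto
  have "\<not> (dword i (top_rows i R) @ [False,False])!c"
  proof
    assume "(dword i (top_rows i R) @ [False,False])!c"
    then obtain k where k: "(k,c) \<in> R" "k \<le> i" using dword_nth'[of c i "top_rows i R"] cb by auto
    then show False using rook_facts(3)[OF R c k(1)] by simp
  qed
  moreover have "dword (Suc i) (top_rows (Suc i) R) = (dword i (top_rows i R) @ [False,False])[c:=True]"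
    using dword_step[of R i c] rook_facts(1)[OF R] row cb by auto
  ultimately show ?thesis using cb by blast
qed

lemma part1:
  assumes R: "rook N R"
  shows "i \<le> N \<Longrightarrow> dyck (dword i (top_rows i R))"
proof (induction i)
  case 0 then show ?case using dyck_TF dword0 by simp
next
  case (Suc i)
  obtain c where c: "1 \<le> c" "c \<le> 2*(i+1)" "\<not> (dword i (top_rows i R) @ [False,False])!c"
     "dword (Suc i) (top_rows (Suc i) R) = (dword i (top_rows i R) @ [False,False])[c:=True]"
    using chain_step[OF R Suc.prems] by blast
  show ?case using lemA(1)[of _ "i+1" c] Suc c by simp
qed

lemma part1_cov:
  assumes R: "rook N R" and i: "Suc i \<le> N"
  shows "covered (dword i (top_rows i R)) (dword (Suc i) (top_rows (Suc i) R))"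
proof -
  obtain c where c: "1 \<le> c" "c \<le> 2*(i+1)" "\<not> (dword i (top_rows i R) @ [False,False])!c"
     "dword (Suc i) (top_rows (Suc i) R) = (dword i (top_rows i R) @ [False,False])[c:=True]"
    using chain_step[OF R i] by blast
  show ?thesis using lemA(2)[of _ "i+1" c] part1[OF R, of i] i c by simp
qed

lemma rook_chain_nth: "i < n \<Longrightarrow> rook_chain n R ! i = dword i (top_rows i R)"
  by (simp add: rook_chain_def)

lemma rook_chain_len[simp]: "length (rook_chain n R) = n"
  by (simp add: rook_chain_def)

lemma inj_half:
  assumes R: "rook N R" and S: "rook N S"
    and eq: "\<And>i. i \<le> N \<Longrightarrow> dword i (top_rows i R) = dword i (top_rows i S)"
    and kc: "(k,c) \<in> R"
  shows "(k,c) \<in> S"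
proof -
  have kb: "1 \<le> k" "k \<le> N" "1 \<le> c" "c \<le> 2*k" using rook_facts(1)[OF R kc] by auto
  have "dword k (top_rows k R) ! c" using dword_nth[of c k "top_rows k R"] kb kc by auto
  then have "dword k (top_rows k S) ! c" using eq[of k] kb by simp
  then obtain k' where k': "(k',c) \<in> S" "k' \<le> k" using dword_nth[of c k "top_rows k S"] kb by auto
  show ?thesis
  proof (cases "k' = k")
    case True then show ?thesis using k' by simp
  next
    case False
    then have k'k: "k' \<le> k - 1" using k' by simp
    have "c \<le> 2*(k-1)" using rook_facts(1)[OF S k'(1)] k'k by simp
    then have "(dword (k-1) (top_rows (k-1) S) @ [False,False]) ! c"
      using dword_nth'[of c "k-1" "top_rows (k-1) S"] k'k k' kb by auto
    then have "(dword (k-1) (top_rows (k-1) R) @ [False,False]) ! c" using eq[of "k-1"] kb by simp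
    moreover have "c < 2*(k-1)+4" using kb by simp
    ultimately obtain k'' where "(k'',c) \<in> R" "k'' \<le> k - 1"
      using dword_nth'[of c "k-1" "top_rows (k-1) R"] kb by auto
    then show ?thesis using rook_facts(3)[OF R kc] kb by fastforce
  qed
qed

theorem mainTheorem3:
  fixes n :: nat
  assumes "n \<ge> 1"
  shows "(\<forall>R. rook (n - 1) R \<longrightarrow>
            (\<forall>i < n. rook i (top_rows i R)) \<and> dyck_chain n (rook_chain n R))
         \<and> bij_betw (rook_chain n) {R. rook (n - 1) R} {Ds. dyck_chain n Ds}"
proof -
  define N where "N = n - 1"
  have nN: "n = Suc N" using assms N_def by simp
  have P1: "(\<forall>i < n. rook i (top_rows i R)) \<and> dyck_chain n (rook_chain n R)" if R: "rook N R" for R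
  proof
    show "\<forall>i < n. rook i (top_rows i R)" using rook_top[OF R] nN by auto
    show "dyck_chain n (rook_chain n R)"
      unfolding dyck_chain_def
    proof (intro conjI allI impI)
      show "length (rook_chain n R) = n" by simp
      fix i assume "i < n"
      then show "dyck (rook_chain n R ! i)"
        using part1[OF R, of i] rook_chain_nth[of i n R] nN by simp
    next
      fix i assume "i < n"
      then show "length (rook_chain n R ! i) = 2 * i + 2"
        using rook_chain_nth[of i n R] by simp
    next
      fix i assume "i + 1 < n"
      then show "covered (rook_chain n R ! i) (rook_chain n R ! (i + 1))"
        using part1_cov[OF R, of i] rook_chain_nth[of i n R] rook_chain_nth[of "i+1" n R] nN by simp
    qed
  qed
  have inj: "inj_on (rook_chain n) {R. rook N R}"
  proof (rule inj_onI)
    fix R S assume R: "R \<in> {R. rook N R}" and S: "S \<in> {R. rook N R}" and eq: "rook_chain n R = rook_chain n S"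
    have eqi: "dword i (top_rows i R) = dword i (top_rows i S)" if "i \<le> N" for i
      using arg_cong[OF eq, of "\<lambda>l. l ! i"] rook_chain_nth[of i n] that nN by simp
    show "R = S"
      using inj_half[of N R S] inj_half[of N S R] R S eqi by auto
  qed
  have surj: "Ds \<in> rook_chain n ` {R. rook N R}" if Ds: "dyck_chain n Ds" for Ds
  proof -
    have lenDs: "length Ds = n" and dk: "\<And>i. i < n \<Longrightarrow> dyck (Ds!i) \<and> length (Ds!i) = 2*i+2"
      and cv: "\<And>i. i+1 < n \<Longrightarrow> covered (Ds!i) (Ds!(i+1))"
      using Ds unfolding dyck_chain_def by auto
    define P where "P k c \<longleftrightarrow> 1 \<le> c \<and> c \<le> 2*k \<and> \<not> (Ds!(k-1)@[False,False])!c
       \<and> Ds!k = (Ds!(k-1)@[False,False])[c:=True]" for k c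
    have exP: "\<exists>c. P k c" if "1 \<le> k" "k \<le> N" for k
    proof -
      have "dyck (Ds!(k-1))" "length (Ds!(k-1)) = 2*k" "dyck (Ds!k)" "length (Ds!k) = 2*k+2"
        using dk[of "k-1"] dk[of k] that nN by auto
      moreover have "covered (Ds!(k-1)) (Ds!k)" using cv[of "k-1"] that nN by simp
      ultimately show ?thesis using lemB[of "Ds!(k-1)" k "Ds!k"] that unfolding P_def by auto
    qed
    define cf where "cf k = (SOME c. P k c)" for k
    have Pcf: "P k (cf k)" if "1 \<le> k" "k \<le> N" for k
      using someI_ex[OF exP[OF that]] cf_def by simp
    define R where "R = {(k, cf k) | k. 1 \<le> k \<and> k \<le> N}"
    have Rmem: "(k,c) \<in> R \<longleftrightarrow> 1 \<le> k \<and> k \<le> N \<and> c = cf k" for k c unfolding R_def by auto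
    have col: "c \<le> 2*k" if "(k,c) \<in> R" for k c using that Pcf[of k] unfolding Rmem P_def by auto
    have DW: "i < n \<Longrightarrow> dword i (top_rows i R) = Ds!i" for i
    proof (induction i)
      case 0
      then show ?case using dword0 dyck_len2[of "Ds!0"] dk[of 0] by simp
    next
      case (Suc i)
      have P: "P (Suc i) (cf (Suc i))" using Pcf[of "Suc i"] Suc.prems nN by simp
      have "dword (Suc i) (top_rows (Suc i) R) = (dword i (top_rows i R) @ [False,False])[cf (Suc i):=True]"
        using dword_step[of R i "cf (Suc i)"] col Rmem P Suc.prems nN unfolding P_def by auto
      then show ?case using Suc P unfolding P_def by simp
    qed
    have rookR: "rook N R"
      unfolding rook_def
    proof (intro conjI ballI allI impI)
      show "R \<subseteq> cells N" unfolding cells_def using Rmem Pcf unfolding P_def by auto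
      fix k assume "k \<in> {1..N}"
      then show "\<exists>!c. (k, c) \<in> R" using Rmem by auto
    next
      fix k k' c assume a: "(k, c) \<in> R" "(k', c) \<in> R"
      have key: "False" if "(a, c) \<in> R" "(b, c) \<in> R" "a < b" for a b
      proof -
        have b: "1 \<le> b" "b \<le> N" "c = cf b" "1 \<le> a" "c = cf a" using that Rmem by auto
        have "\<not> (Ds!(b-1)@[False,False])!c" using Pcf[of b] b unfolding P_def by simp
        moreover have "Ds!(b-1) = dword (b-1) (top_rows (b-1) R)" using DW[of "b-1"] b nN by simp
        moreover have "c \<le> 2*(b-1)" using col[OF that(1)] that by simp
        ultimately show False using dword_nth'[of c "b-1" "top_rows (b-1) R"] that b by auto
      qed
      show "k = k'" using key[of k k'] key[of k' k] a by (cases k k' rule: linorder_cases) auto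
    qed
    have "rook_chain n R = Ds"
      by (rule nth_equalityI) (simp_all add: lenDs rook_chain_nth DW)
    then show ?thesis using rookR by blast
  qed
  show ?thesis
    unfolding N_def[symmetric]
  proof
    show "\<forall>R. rook N R \<longrightarrow> (\<forall>i<n. rook i (top_rows i R)) \<and> dyck_chain n (rook_chain n R)"
      using P1 by blast
    show "bij_betw (rook_chain n) {R. rook N R} {Ds. dyck_chain n Ds}"
      unfolding bij_betw_def
    proof
      show "inj_on (rook_chain n) {R. rook N R}" using inj .
      show "rook_chain n ` {R. rook N R} = {Ds. dyck_chain n Ds}"
        using P1 surj by blast
    qed
  qed
qed


end
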